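(* Under the hypotheses of Theorem 5 (Part II) stated in the context, let $H$ denote the cdf of the limit $Z_\infty$, where either $c=0$ and $E e^{-\lambda Z_\infty}=\Phi_\rho(\lambda)$, or $c=\infty$ (with $(\mathrm{A}_\alpha)$) and $E e^{-\lambda Z_\infty}=\Phi_\alpha(\lambda)$. Then $H$ belongs to the normal domain of attraction of a stable law with parameter $\rho\in(1/2,1)$; namely, there is a constant $C\in(0,\infty)$ with $1-H(x)\sim C x^{-\rho}$ as $x\to\infty$.
   Context: Standing parameters: $b>0$ (half the offspring variance), $\theta<1/2$, $\rho\in(1/2,1)$ with $\theta+\rho<1$, and $\alpha\in(1/2,1]$. For $a\in(0,1]$ and $\lambda\ge0$, $$\Phi_a(\lambda)=1-\lambda^{\rho-a}(\lambda+1)^{a-\theta-\rho}(a+1-\theta-\rho)B(1-\theta,a+1-\rho)\,I_{\lambda/(\lambda+1)}(a,1-\theta-\rho)-\frac{\lambda\theta}{B(1-\rho,a)}\int_0^1\!\!\int_0^1\frac{u^{1-\rho}(1-u)^{a-1}}{(1-y)^{\rho}(1+\lambda yu)^{\theta+1}}\,dy\,du,$$ where $B$ is the Beta function, $B_x(s,v)=\int_0^x t^{s-1}(1-t)^{v-1}dt$ and $I_x(s,v)=B_x(s,v)/B(s,v)$. Theorem 5 (Part II) asserts that for the critical branching regenerative process with migration $Z_t$ (offspring mean 1, variance $2b$; recurrence parameter $\theta$; cycle initial states with tail $P\{Y^o_{j,0}>x\}\sim x^{-\rho}\ell(x)$; down-periods either of finite mean or with tail $1-A(t)\sim t^{-\alpha}L_A(t)$,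 $E T_{d,1}=\infty$; $c=\lim(1-A(t))/(1-F(t))$ with $F$ the cdf of the cycle lifetime), the limit $Z_\infty$ of $Z_t/(bt)$ (unconditionally if $c<\infty$, conditionally on $Z_t>0$ if $c=\infty$) has Laplace transform $(c+\Phi_\rho)/(c+1)$ if $c<\infty$ and $\Phi_\alpha$ if $c=\infty$. A random variable is in the normal domain of attraction of a positive stable law with parameter $\rho\in(0,1)$ when its tail is asymptotically $Cx^{-\rho}$, $C>0$. *)

theory Defs
  imports "HOL-Probability.Probability" "HOL-Library.Landau_Symbols"
begin

definition incBeta :: "real \<Rightarrow> real \<Rightarrow> real \<Rightarrow> real" where
  "incBeta x s v = (LBINT t=0..x. t powr (s - 1) * (1 - t) powr (v - 1))"

definition regIncBeta :: "real \<Rightarrow> real \<Rightarrow> real \<Rightarrow> real" where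
  "regIncBeta x s v = incBeta x s v / Beta s v"

definition Phi :: "real \<Rightarrow> real \<Rightarrow> real \<Rightarrow> real \<Rightarrow> real" where
  "Phi \<theta> \<rho> a lam =
     1 - lam powr (\<rho> - a) * (lam + 1) powr (a - \<theta> - \<rho>)
         * (a + 1 - \<theta> - \<rho>) * Beta (1 - \<theta>) (a + 1 - \<rho>)
         * regIncBeta (lam / (lam + 1)) a (1 - \<theta> - \<rho>)
       - lam * \<theta> / Beta (1 - \<rho>) a *
         (LBINT u=0..1. (LBINT y=0..1.
            u powr (1 - \<rho>) * (1 - u) powr (a - 1)
            / ((1 - y) powr \<rho> * (1 + lam * y * u) powr (\<theta> + 1))))"

end

theory Submission
  imports Defs
begin

lemma powr_integrable_0:
  fixes p c :: real
  assumes "p > -1" "c > 0"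
  shows "set_integrable lborel {0<..<c} (\<lambda>y. y powr p)"
    and "(LBINT y=0..c. y powr p) = c powr (p+1) / (p+1)"
proof -
  have A: "(((\<lambda>y. y powr (p+1) / (p+1)) \<circ> real_of_ereal) \<longlongrightarrow> 0) (at_right (ereal 0))"
    unfolding ereal_tendsto_simps1
  proof -
    have "((\<lambda>y. y powr (p+1) / (p+1)) \<longlongrightarrow> 0 powr (p+1) / (p+1)) (at_right 0)"
      using assms by (intro tendsto_intros tendsto_powr') (auto simp: eventually_at_right_less eventually_at_filter)
    then show "((\<lambda>y. y powr (p+1) / (p+1)) \<longlongrightarrow> 0) (at_right 0)" by simp
  qed
  have B: "(((\<lambda>y. y powr (p+1) / (p+1)) \<circ> real_of_ereal) \<longlongrightarrow> c powr (p+1) / (p+1)) (at_left (ereal c))"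
    unfolding ereal_tendsto_simps1
    using assms by (intro tendsto_intros) auto
  have D: "DERIV (\<lambda>y. y powr (p+1) / (p+1)) x :> x powr p" if "0 < x" for x
  proof -
    have nz: "1 + (p * p + p * 2) \<noteq> 0" proof - have "1 + (p * p + p * 2) = (p+1)^2" by (simp add: power2_eq_square algebra_simps) then show ?thesis using assms by simp qed
    have "(x powr p + (p * (p * x powr p) + p * (2 * x powr p))) = x powr p * (1 + (p * p + p * 2))"
      by (simp add: algebra_simps)
    then show ?thesis
      using that assms nz by (auto intro!: derivative_eq_intros simp: powr_diff field_simps)
  qed
  note R = interval_integral_FTC_nonneg[where a = "ereal 0" and b = "ereal c", OF _ _ _ _ A B]
  have "set_integrable lborel (einterval (ereal 0) (ereal c)) (\<lambda>y. y powr p)"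
    by (rule R(1)[where f="\<lambda>y. y powr p"]) (use D assms in \<open>auto intro!: continuous_intros\<close>)
  then show "set_integrable lborel {0<..<c} (\<lambda>y. y powr p)" by simp
  have "(LBINT y=ereal 0..ereal c. y powr p) = c powr (p+1) / (p+1) - 0"
    by (rule R(2)[where f="\<lambda>y. y powr p"]) (use D assms in \<open>auto intro!: continuous_intros\<close>)
  then show "(LBINT y=0..c. y powr p) = c powr (p+1) / (p+1)" by (simp add: zero_ereal_def)
qed

lemma powr_integrable_inf:
  fixes q c :: real
  assumes "q < -1" "c > 0"
  shows "set_integrable lborel {c<..} (\<lambda>y. y powr q)"
    and "(LBINT y=c..\<infinity>. y powr q) = - (c powr (q+1) / (q+1))"
proof -
  have A: "(((\<lambda>y. y powr (q+1) / (q+1)) \<circ> real_of_ereal) \<longlongrightarrow> c powr (q+1) / (q+1)) (at_right (ereal c))"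
    unfolding ereal_tendsto_simps1
    using assms by (intro tendsto_intros) auto
  have B: "(((\<lambda>y. y powr (q+1) / (q+1)) \<circ> real_of_ereal) \<longlongrightarrow> 0) (at_left \<infinity>)"
    unfolding ereal_tendsto_simps1
  proof -
    have "((\<lambda>y. y powr (q+1)) \<longlongrightarrow> 0) at_top"
      using assms by (intro tendsto_neg_powr filterlim_ident) auto
    then have "((\<lambda>y. y powr (q+1) / (q+1)) \<longlongrightarrow> 0 / (q+1)) at_top"
      using assms by (intro tendsto_intros) auto
    then show "((\<lambda>y. y powr (q+1) / (q+1)) \<longlongrightarrow> 0) at_top" by simp
  qed
  have D: "DERIV (\<lambda>y. y powr (q+1) / (q+1)) x :> x powr q" if "0 < x" for x
  proof -
    have nz: "1 + (q * q + q * 2) \<noteq> 0" proof - have "1 + (q * q + q * 2) = (q+1)^2" by (simp add: power2_eq_square algebra_simps) then show ?thesis using assms by simp qed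
    have "(x powr q + (q * (q * x powr q) + q * (2 * x powr q))) = x powr q * (1 + (q * q + q * 2))"
      by (simp add: algebra_simps)
    then show ?thesis
      using that assms nz by (auto intro!: derivative_eq_intros simp: powr_diff field_simps)
  qed
  note R = interval_integral_FTC_nonneg[where a = "ereal c" and b = "\<infinity>", OF _ _ _ _ A B]
  have "set_integrable lborel (einterval (ereal c) \<infinity>) (\<lambda>y. y powr q)"
    by (rule R(1)[where f="\<lambda>y. y powr q"]) (use D assms in \<open>auto intro!: continuous_intros\<close>)
  then show "set_integrable lborel {c<..} (\<lambda>y. y powr q)" by simp
  have "(LBINT y=ereal c..\<infinity>. y powr q) = 0 - c powr (q+1) / (q+1)"
    by (rule R(2)[where f="\<lambda>y. y powr q"]) (use D assms in \<open>auto intro!: continuous_intros\<close>)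
  then show "(LBINT y=c..\<infinity>. y powr q) = - (c powr (q+1) / (q+1))" by simp
qed

lemma J_integrable:
  fixes r :: real
  assumes "0 < r" "r < 1"
  shows "set_integrable lborel {0<..} (\<lambda>y. (1 - exp (- y)) * y powr (-r-1))"
proof -
  have meas: "set_borel_measurable lborel A (\<lambda>y. (1 - exp (- y)) * y powr (-r-1))" if "A \<in> sets borel" for A
    unfolding set_borel_measurable_def using that by measurable
  have I1: "set_integrable lborel {0<..<1} (\<lambda>y. (1 - exp (- y)) * y powr (-r-1))"
  proof (rule set_integrable_bound[OF powr_integrable_0(1)[of "-r" 1]])
    show "AE x in lborel. x \<in> {0<..<1} \<longrightarrow> norm ((1 - exp (- x)) * x powr (- r - 1)) \<le> norm (x powr - r)"
    proof (rule AE_I2, rule impI)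
      fix x :: real assume x: "x \<in> {0<..<1}"
      have e1: "1 - exp (-x) \<le> x" using exp_ge_add_one_self[of "-x"] by simp
      have e0: "0 \<le> 1 - exp (-x)" using x by simp
      have "(1 - exp (- x)) * x powr (- r - 1) \<le> x * x powr (- r - 1)"
        using e1 by (intro mult_right_mono) auto
      also have "\<dots> = x powr (-r)" using x by (simp add: powr_add[symmetric] powr_mult_base)
      finally show "norm ((1 - exp (- x)) * x powr (- r - 1)) \<le> norm (x powr - r)"
        using e0 by simp
    qed
  qed (use assms meas in auto)
  have I2: "set_integrable lborel {1/2<..} (\<lambda>y. (1 - exp (- y)) * y powr (-r-1))"
  proof (rule set_integrable_bound[OF powr_integrable_inf(1)[of "-r-1" "1/2"]])
    show "AE x in lborel. x \<in> {1/2<..} \<longrightarrow> norm ((1 - exp (- x)) * x powr (- r - 1)) \<le> norm (x powr (- r - 1))"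
    proof (rule AE_I2, rule impI)
      fix x :: real assume x: "x \<in> {1/2<..}"
      have e0: "0 \<le> 1 - exp (-x)" "1 - exp (-x) \<le> 1" using x by auto
      have "(1 - exp (- x)) * x powr (- r - 1) \<le> 1 * x powr (- r - 1)"
        using e0 by (intro mult_right_mono) auto
      then show "norm ((1 - exp (- x)) * x powr (- r - 1)) \<le> norm (x powr (- r - 1))"
        using e0 by simp
    qed
  qed (use assms meas in auto)
  have "set_integrable lborel ({0<..<1} \<union> {1/2<..}) (\<lambda>y. (1 - exp (- y)) * y powr (-r-1))"
    using set_integrable_Un[OF I1 I2] by auto
  moreover have "{0<..<1} \<union> {1/2<..} = {0::real<..}" by auto
  ultimately show ?thesis by simp
qed

lemma J_scale:
  fixes r c :: real
  assumes "0 < r" "r < 1" "0 < c"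
  shows "set_integrable lborel {0<..} (\<lambda>y. (1 - exp (- (c*y))) * y powr (-r-1))"
    and "(LINT y:{0<..}|lborel. (1 - exp (- (c*y))) * y powr (-r-1))
         = c powr r * (LINT y:{0<..}|lborel. (1 - exp (- y)) * y powr (-r-1))"
proof -
  define f where "f = (\<lambda>y::real. indicator {0<..} y * ((1 - exp (- y)) * y powr (-r-1)))"
  have fi: "integrable lborel f"
    using J_integrable[OF assms(1,2)] unfolding f_def set_integrable_def by simp
  have eq: "f (0 + c * x) = c powr (-r-1) * (indicator {0<..} x * ((1 - exp (- (c*x))) * x powr (-r-1)))" for x
    using assms by (auto simp: f_def powr_mult indicator_def zero_less_mult_iff)
  have "integrable lborel (\<lambda>x. f (0 + c * x))"
    using lborel_integrable_real_affine[OF fi, of c 0] assms by simp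
  then have "integrable lborel (\<lambda>x. c powr (-r-1) * (indicator {0<..} x * ((1 - exp (- (c*x))) * x powr (-r-1))))"
    by (simp only: eq)
  then have "integrable lborel (\<lambda>x. c powr (r+1) * (c powr (-r-1) * (indicator {0<..} x * ((1 - exp (- (c*x))) * x powr (-r-1)))))"
    by simp
  moreover have "c powr (r+1) * c powr (-r-1) = 1" using assms by (simp add: powr_add[symmetric])
  ultimately have gi: "integrable lborel (\<lambda>x. indicator {0<..} x * ((1 - exp (- (c*x))) * x powr (-r-1)))"
    by (simp add: mult.assoc[symmetric])
  then show "set_integrable lborel {0<..} (\<lambda>y. (1 - exp (- (c*y))) * y powr (-r-1))"
    unfolding set_integrable_def by simp
  have "integral\<^sup>L lborel f = \<bar>c\<bar> *\<^sub>R (LBINT x. f (0 + c * x))"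
    using assms by (intro lborel_integral_real_affine) auto
  also have "\<dots> = c * (c powr (-r-1) * (LBINT x. indicator {0<..} x * ((1 - exp (- (c*x))) * x powr (-r-1))))"
    using assms by (simp only: eq integral_mult_right_zero) simp
  also have "\<dots> = c powr (-r) * (LBINT x. indicator {0<..} x * ((1 - exp (- (c*x))) * x powr (-r-1)))"
    using assms by (simp add: powr_mult_base mult.assoc[symmetric])
  finally have "integral\<^sup>L lborel f = c powr (-r) * (LBINT x. indicator {0<..} x * ((1 - exp (- (c*x))) * x powr (-r-1)))" .
  then have "c powr r * integral\<^sup>L lborel f = (LBINT x. indicator {0<..} x * ((1 - exp (- (c*x))) * x powr (-r-1)))"
    using assms by (simp add: mult.assoc[symmetric] powr_add[symmetric])
  then show "(LINT y:{0<..}|lborel. (1 - exp (- (c*y))) * y powr (-r-1))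
         = c powr r * (LINT y:{0<..}|lborel. (1 - exp (- y)) * y powr (-r-1))"
    unfolding set_lebesgue_integral_def f_def by simp
qed

lemma filterlim_scale_at_right0:
  fixes c :: real assumes "c > 0"
  shows "filterlim (\<lambda>s. c * s) (at_right 0) (at_right 0)"
proof -
  have "((\<lambda>s. c * s) \<longlongrightarrow> c * 0) (at_right 0)"
    by (intro tendsto_intros)
  moreover have "eventually (\<lambda>s. c * s \<in> {0<..} \<and> c * s \<noteq> 0) (at_right (0::real))"
    using assms by (auto simp: eventually_at_right_less eventually_at_filter)
  ultimately show ?thesis by (auto simp: filterlim_at)
qed

lemma laplace_poly_limit:
  fixes M :: "real measure" and r K :: real and a :: "nat \<Rightarrow> real"
  assumes "prob_space M" "sets M = sets borel" "AE x in M. 0 \<le> x" "0 < r"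
    and lim: "((\<lambda>s. (1 - (\<integral>x. exp (- s * x) \<partial>M)) / s powr r) \<longlongrightarrow> K) (at_right 0)"
    and sum0: "(\<Sum>i\<le>n. a i) = 0"
  shows "((\<lambda>s. (\<integral>x. (\<Sum>i\<le>n. a i * exp (- s * x) ^ i) \<partial>M) / s powr r)
           \<longlongrightarrow> - K * (\<Sum>i\<le>n. a i * real i powr r)) (at_right 0)"
proof -
  interpret prob_space M by fact
  define L where "L = (\<lambda>s. \<integral>x. exp (- s * x) \<partial>M)"
  have [measurable_cong]: "sets M = sets borel" by (rule assms(2))
  have integ: "integrable M (\<lambda>x. exp (- s * x))" if "0 \<le> s" for s
  proof (rule integrable_const_bound[where B=1])
    show "AE x in M. norm (exp (- s * x)) \<le> 1"
      using assms(3) by eventually_elim (use that in \<open>auto simp: mult_nonneg_nonneg\<close>)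
  qed measurable
  have L0: "L 0 = 1" unfolding L_def by (simp add: prob_space)
  have eq: "(\<integral>x. (\<Sum>i\<le>n. a i * exp (- s * x) ^ i) \<partial>M) / s powr r
        = (\<Sum>i\<le>n. a i * ((L (real i * s) - 1) / s powr r))" if "0 < s" for s
  proof -
    have e: "exp (- s * x) ^ i = exp (- (real i * s) * x)" for i x
      by (simp add: exp_of_nat_mult[symmetric] algebra_simps)
    have "(\<integral>x. (\<Sum>i\<le>n. a i * exp (- s * x) ^ i) \<partial>M) = (\<Sum>i\<le>n. a i * L (real i * s))"
      unfolding e L_def
    proof (subst Bochner_Integration.integral_sum)
      show "\<And>i. i \<in> {..n} \<Longrightarrow> integrable M (\<lambda>x. a i * exp (- (real i * s) * x))"
        using that by (intro integrable_mult_right integ) auto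
    qed simp
    also have "\<dots> = (\<Sum>i\<le>n. a i * L (real i * s)) - (\<Sum>i\<le>n. a i)" using sum0 by simp
    also have "\<dots> = (\<Sum>i\<le>n. a i * (L (real i * s) - 1))"
      by (simp add: sum_subtractf[symmetric] algebra_simps)
    finally show ?thesis by (simp add: sum_divide_distrib algebra_simps)
  qed
  have trm: "((\<lambda>s. (L (real i * s) - 1) / s powr r) \<longlongrightarrow> - K * real i powr r) (at_right 0)" for i
  proof (cases "i = 0")
    case True
    then show ?thesis using L0 by simp
  next
    case False
    then have ip: "real i > 0" by simp
    have "((\<lambda>s. (1 - L (real i * s)) / (real i * s) powr r) \<longlongrightarrow> K) (at_right 0)"
      using filterlim_compose[OF lim filterlim_scale_at_right0[OF ip]] unfolding L_def .
    then have "((\<lambda>s. - (real i powr r) * ((1 - L (real i * s)) / (real i * s) powr r)) \<longlongrightarrow> - (real i powr r) * K) (at_right 0)"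
      by (intro tendsto_intros)
    moreover have "- (real i powr r) * ((1 - L (real i * s)) / (real i * s) powr r) = (L (real i * s) - 1) / s powr r" if "s > 0" for s
    proof -
      have "real i powr r > 0" "s powr r > 0" using ip that by auto
      then show ?thesis by (simp add: powr_mult field_simps)
    qed
    then have "eventually (\<lambda>s. - (real i powr r) * ((1 - L (real i * s)) / (real i * s) powr r) = (L (real i * s) - 1) / s powr r) (at_right 0)"
      by (auto simp: eventually_at_right_less eventually_at_filter)
    ultimately show ?thesis by (auto elim: tendsto_cong[THEN iffD1, rotated] simp: mult.commute)
  qed
  have "((\<lambda>s. (\<Sum>i\<le>n. a i * ((L (real i * s) - 1) / s powr r))) \<longlongrightarrow> (\<Sum>i\<le>n. a i * (- K * real i powr r))) (at_right 0)"
    by (intro tendsto_intros trm)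
  moreover have "eventually (\<lambda>s. (\<Sum>i\<le>n. a i * ((L (real i * s) - 1) / s powr r)) = (\<integral>x. (\<Sum>i\<le>n. a i * exp (- s * x) ^ i) \<partial>M) / s powr r) (at_right 0)"
    using eq by (auto simp: eventually_at_right_less eventually_at_filter)
  ultimately have "((\<lambda>s. (\<integral>x. (\<Sum>i\<le>n. a i * exp (- s * x) ^ i) \<partial>M) / s powr r) \<longlongrightarrow> (\<Sum>i\<le>n. a i * (- K * real i powr r))) (at_right 0)"
    by (rule tendsto_cong[THEN iffD1, rotated])
  then show ?thesis by (simp add: sum_distrib_left algebra_simps)
qed

lemma ref_poly:
  fixes r :: real and a :: "nat \<Rightarrow> real"
  assumes "0 < r" "r < 1" and sum0: "(\<Sum>i\<le>n. a i) = 0"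
  shows "set_integrable lborel {0<..} (\<lambda>y. (\<Sum>i\<le>n. a i * exp (- y) ^ i) * y powr (-r-1))"
    and "(LINT y:{0<..}|lborel. (\<Sum>i\<le>n. a i * exp (- y) ^ i) * y powr (-r-1))
         = - (LINT y:{0<..}|lborel. (1 - exp (- y)) * y powr (-r-1)) * (\<Sum>i\<le>n. a i * real i powr r)"
proof -
  define J where "J = (LINT y:{0<..}|lborel. (1 - exp (- y)) * y powr (-r-1))"
  define g where "g = (\<lambda>i y. indicator {0<..} y * ((1 - exp (- (real i * y))) * y powr (-r-1)))"
  have gi: "integrable lborel (g i)" for i
  proof (cases "i = 0")
    case True then show ?thesis by (simp add: g_def)
  next
    case False
    then show ?thesis using J_scale(1)[OF assms(1,2), of "real i"] by (simp add: g_def set_integrable_def)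
  qed
  have gv: "integral\<^sup>L lborel (g i) = real i powr r * J" for i
  proof (cases "i = 0")
    case True then show ?thesis by (simp add: g_def)
  next
    case False
    then show ?thesis using J_scale(2)[OF assms(1,2), of "real i"] by (simp add: g_def set_lebesgue_integral_def J_def)
  qed
  have pt: "indicator {0<..} y *\<^sub>R ((\<Sum>i\<le>n. a i * exp (- y) ^ i) * y powr (-r-1)) = (\<Sum>i\<le>n. - a i * g i y)" for y
  proof -
    have e: "exp (- y) ^ i = exp (- (real i * y))" for i
      by (simp add: exp_of_nat_mult[symmetric] algebra_simps)
    have "(\<Sum>i\<le>n. a i * exp (- y) ^ i) = (\<Sum>i\<le>n. a i * exp (- y) ^ i) - (\<Sum>i\<le>n. a i)" using sum0 by simp
    also have "\<dots> = (\<Sum>i\<le>n. - a i * (1 - exp (- (real i * y))))"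
      by (simp add: sum_subtractf[symmetric] algebra_simps e)
    finally show ?thesis
      by (simp add: g_def sum_distrib_left sum_distrib_right algebra_simps)
  qed
  have "integrable lborel (\<lambda>y. \<Sum>i\<le>n. - a i * g i y)"
    by (intro Bochner_Integration.integrable_sum integrable_mult_right gi)
  then show "set_integrable lborel {0<..} (\<lambda>y. (\<Sum>i\<le>n. a i * exp (- y) ^ i) * y powr (-r-1))"
    unfolding set_integrable_def pt .
  have "(LINT y:{0<..}|lborel. (\<Sum>i\<le>n. a i * exp (- y) ^ i) * y powr (-r-1)) = (LBINT y. (\<Sum>i\<le>n. - a i * g i y))"
    unfolding set_lebesgue_integral_def pt ..
  also have "\<dots> = (\<Sum>i\<le>n. - a i * (real i powr r * J))"
    by (subst Bochner_Integration.integral_sum) (auto intro: gi simp: gv)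
  also have "\<dots> = - J * (\<Sum>i\<le>n. a i * real i powr r)"
    by (simp add: sum_distrib_left algebra_simps)
  finally show "(LINT y:{0<..}|lborel. (\<Sum>i\<le>n. a i * exp (- y) ^ i) * y powr (-r-1))
         = - (LINT y:{0<..}|lborel. (1 - exp (- y)) * y powr (-r-1)) * (\<Sum>i\<le>n. a i * real i powr r)"
    unfolding J_def .
qed

lemma weierstrass_upper:
  fixes g :: "real \<Rightarrow> real" and e :: real
  assumes "continuous_on {0..1} g" "e > 0"
  shows "\<exists>q n. \<forall>t\<in>{0..1}. g t \<le> (\<Sum>i\<le>n. q i * t ^ i) \<and> (\<Sum>i\<le>n. q i * t ^ i) \<le> g t + 2 * e"
proof -
  have "continuous_on {0..1} (\<lambda>t. g t + e)" using assms by (intro continuous_intros)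
  then obtain p where p: "real_polynomial_function p" "\<And>x. x \<in> {0..1::real} \<Longrightarrow> \<bar>(g x + e) - p x\<bar> < e"
    using Stone_Weierstrass_real_polynomial_function[of "{0..1::real}" "\<lambda>t. g t + e" e] assms by auto
  obtain q n where pq: "p = (\<lambda>x. \<Sum>i\<le>n. q i * x ^ i)"
    using p(1) unfolding real_polynomial_function_iff_sum by auto
  show ?thesis
  proof (intro exI ballI conjI)
    fix t :: real assume "t \<in> {0..1}"
    from p(2)[OF this] show "g t \<le> (\<Sum>i\<le>n. q i * t ^ i)" "(\<Sum>i\<le>n. q i * t ^ i) \<le> g t + 2 * e"
      unfolding pq by auto
  qed
qed

lemma poly_times_one_minus:
  fixes q :: "nat \<Rightarrow> real"
  shows "\<exists>b m. (\<forall>t. (1 - t) * (\<Sum>i\<le>n. q i * t ^ i) = (\<Sum>i\<le>m. b i * t ^ i)) \<and> (\<Sum>i\<le>m. b i) = 0"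
proof -
  have p1: "real_polynomial_function (\<lambda>t::real. \<Sum>i\<le>n. q i * t ^ i)"
    unfolding real_polynomial_function_iff_sum by blast
  have p2: "real_polynomial_function (\<lambda>t::real. 1 - t)"
    by (intro real_polynomial_function_diff) (auto intro: bounded_linear_ident)
  have "real_polynomial_function (\<lambda>t. (1 - t) * (\<Sum>i\<le>n. q i * t ^ i))"
    by (rule real_polynomial_function.intros(4)[OF p2 p1])
  then obtain b m where bm: "(\<lambda>t. (1 - t) * (\<Sum>i\<le>n. q i * t ^ i)) = (\<lambda>x. \<Sum>i\<le>m. b i * x ^ i)"
    unfolding real_polynomial_function_iff_sum by auto
  have "(\<Sum>i\<le>m. b i) = (\<Sum>i\<le>m. b i * 1 ^ i)" by simp
  also have "\<dots> = (1 - 1) * (\<Sum>i\<le>n. q i * 1 ^ i)" using fun_cong[OF bm, of 1] by simp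
  finally have "(\<Sum>i\<le>m. b i) = 0" by simp
  with bm show ?thesis by (metis)
qed

definition clip :: "real \<Rightarrow> real" where "clip z = min 1 (max 0 z)"

lemma approx_main:
  fixes r \<epsilon> :: real
  assumes r: "0 < r" "r < 1" and \<epsilon>: "\<epsilon> > 0"
  shows "\<exists>a n b m. (\<Sum>i\<le>n. a i) = 0 \<and> (\<Sum>i\<le>m. b i) = 0 \<and>
     (\<forall>t\<in>{0..1}. (\<Sum>i\<le>n. a i * t ^ i) \<le> (if t < exp (-1) then 1 else 0)) \<and>
     (\<forall>t\<in>{0..1}. (if t < exp (-1) then 1 else 0) \<le> (\<Sum>i\<le>m. b i * t ^ i)) \<and>
     (LINT y:{0<..}|lborel. (\<Sum>i\<le>m. b i * exp (- y) ^ i) * y powr (-r-1))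
       - (LINT y:{0<..}|lborel. (\<Sum>i\<le>n. a i * exp (- y) ^ i) * y powr (-r-1)) < \<epsilon>"
proof -
  define c where "c = exp (-1::real)"
  have c0: "0 < c" and c1: "c < 1" unfolding c_def by auto
  have lnc: "ln c = -1" unfolding c_def by simp
  define \<phi> where "\<phi> = (\<lambda>\<delta>. (ln (c + \<delta>) - ln (c - \<delta>)) * (- ln (c + \<delta>)) powr (-r-1))"
  have "(\<phi> \<longlongrightarrow> (ln (c + 0) - ln (c - 0)) * (- ln (c + 0)) powr (-r-1)) (at_right 0)"
    unfolding \<phi>_def using c0 lnc by (intro tendsto_intros) auto
  then have \<phi>lim: "(\<phi> \<longlongrightarrow> 0) (at_right 0)" by simp
  have ev: "eventually (\<lambda>\<delta>. \<phi> \<delta> < \<epsilon>/2 \<and> 0 < \<delta> \<and> \<delta> < c \<and> c + \<delta> < 1) (at_right 0)"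
  proof (intro eventually_conj)
    show "eventually (\<lambda>\<delta>. \<phi> \<delta> < \<epsilon>/2) (at_right 0)"
      using order_tendstoD(2)[OF \<phi>lim, where a="\<epsilon>/2"] \<epsilon> by simp
    show "eventually (\<lambda>\<delta>::real. 0 < \<delta>) (at_right 0)" by (simp add: eventually_at_right_less)
    show "eventually (\<lambda>\<delta>. \<delta> < c) (at_right 0)" unfolding eventually_at_right_field using c0 by blast
    show "eventually (\<lambda>\<delta>. c + \<delta> < 1) (at_right 0)"
      unfolding eventually_at_right_field using c1 by (intro exI[of _ "1-c"]) auto
  qed
  obtain \<delta> where \<delta>: "\<phi> \<delta> < \<epsilon>/2" "0 < \<delta>" "\<delta> < c" "c + \<delta> < 1"
    using eventually_happens'[OF _ ev] by auto
  define J where "J = (LINT y:{0<..}|lborel. (1 - exp (- y)) * y powr (-r-1))"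
  have J0: "J \<ge> 0" unfolding J_def set_lebesgue_integral_def
    by (intro integral_nonneg_AE AE_I2) (auto simp: indicator_def)
  define e where "e = \<epsilon> / (8 * (J + 1))"
  have e0: "e > 0" unfolding e_def using J0 \<epsilon> by auto
  have eJ: "4 * e * J < \<epsilon> / 2" unfolding e_def using J0 \<epsilon> by (simp add: field_simps)
  define d where "d = c + \<delta>"
  define Gu where "Gu = (\<lambda>t. clip ((d - t) / \<delta>) / (1 - min t d))"
  define Gl where "Gl = (\<lambda>t. clip ((c - t) / \<delta>) / (1 - min t d))"
  have den: "1 - min t d > 0" for t using \<delta> unfolding d_def by auto
  have cGu: "continuous_on {0..1} Gu" unfolding Gu_def clip_def
    using den \<delta> by (intro continuous_intros) (auto simp: less_imp_neq[symmetric])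
  have cGl: "continuous_on {0..1} Gl" unfolding Gl_def clip_def
    using den \<delta> by (intro continuous_intros) (auto simp: less_imp_neq[symmetric])
  obtain qu nu where qu: "\<forall>t\<in>{0..1}. Gu t \<le> (\<Sum>i\<le>nu. qu i * t ^ i) \<and> (\<Sum>i\<le>nu. qu i * t ^ i) \<le> Gu t + 2 * e"
    using weierstrass_upper[OF cGu e0] by blast
  have cGl': "continuous_on {0..1} (\<lambda>t. Gl t - 2 * e)" using cGl by (intro continuous_intros)
  obtain ql nl where ql: "\<forall>t\<in>{0..1}. Gl t - 2 * e \<le> (\<Sum>i\<le>nl. ql i * t ^ i) \<and> (\<Sum>i\<le>nl. ql i * t ^ i) \<le> Gl t - 2 * e + 2 * e"
    using weierstrass_upper[OF cGl' e0] by blast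
  obtain b m where bm: "\<forall>t. (1 - t) * (\<Sum>i\<le>nu. qu i * t ^ i) = (\<Sum>i\<le>m. b i * t ^ i)" "(\<Sum>i\<le>m. b i) = 0"
    using poly_times_one_minus by blast
  obtain a n where an: "\<forall>t. (1 - t) * (\<Sum>i\<le>nl. ql i * t ^ i) = (\<Sum>i\<le>n. a i * t ^ i)" "(\<Sum>i\<le>n. a i) = 0"
    using poly_times_one_minus by blast
  have clip01: "0 \<le> clip z" "clip z \<le> 1" for z unfolding clip_def by auto
  have idu: "(1 - t) * Gu t = clip ((d - t) / \<delta>)" if "t \<le> 1" for t
  proof (cases "t \<le> d")
    case True
    then have "1 - t > 0" using \<delta> unfolding d_def by simp
    then show ?thesis using True unfolding Gu_def by (simp add: min_def)
  next
    case False
    then have "(d - t) / \<delta> \<le> 0" using \<delta> by (simp add: divide_nonpos_pos)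
    then show ?thesis unfolding Gu_def clip_def by (simp add: min_def max_def)
  qed
  have idl: "(1 - t) * Gl t = clip ((c - t) / \<delta>)" if "t \<le> 1" for t
  proof (cases "t \<le> d")
    case True
    then have "1 - t > 0" using \<delta> unfolding d_def by simp
    then show ?thesis using True unfolding Gl_def by (simp add: min_def)
  next
    case False
    then have "(c - t) / \<delta> \<le> 0" using \<delta> unfolding d_def by (simp add: divide_nonpos_pos)
    then show ?thesis unfolding Gl_def clip_def by (simp add: min_def max_def)
  qed
  have up: "(if t < exp (-1) then 1 else 0) \<le> (\<Sum>i\<le>m. b i * t ^ i)" if t: "t \<in> {0..1}" for t
  proof -
    have "(1 - t) * Gu t \<le> (1 - t) * (\<Sum>i\<le>nu. qu i * t ^ i)"
      using qu t by (intro mult_left_mono) auto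
    then have A: "clip ((d - t) / \<delta>) \<le> (\<Sum>i\<le>m. b i * t ^ i)" using idu[of t] t bm(1) by auto
    have "(if t < c then 1 else 0) \<le> clip ((d - t) / \<delta>)"
    proof (cases "t < c")
      case True
      then have "(d - t) / \<delta> \<ge> 1" using \<delta> unfolding d_def by (simp add: field_simps)
      then show ?thesis using True unfolding clip_def by simp
    qed (use clip01 in simp)
    then show ?thesis using A unfolding c_def by linarith
  qed
  have lo: "(\<Sum>i\<le>n. a i * t ^ i) \<le> (if t < exp (-1) then 1 else 0)" if t: "t \<in> {0..1}" for t
  proof -
    have "(1 - t) * (\<Sum>i\<le>nl. ql i * t ^ i) \<le> (1 - t) * Gl t"
      using ql t by (intro mult_left_mono) auto
    then have A: "(\<Sum>i\<le>n. a i * t ^ i) \<le> clip ((c - t) / \<delta>)" using idl[of t] t an(1) by auto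
    have "clip ((c - t) / \<delta>) \<le> (if t < c then 1 else 0)"
    proof (cases "t < c")
      case False
      then have "(c - t) / \<delta> \<le> 0" using \<delta> by (simp add: divide_nonpos_pos)
      then show ?thesis using False unfolding clip_def by simp
    qed (use clip01 in simp)
    then show ?thesis using A unfolding c_def by linarith
  qed
  define \<alpha> where "\<alpha> = - ln d"
  define \<beta> where "\<beta> = - ln (c - \<delta>)"
  have d1: "d < 1" "0 < d" using \<delta> c0 unfolding d_def by auto
  have \<alpha>0: "\<alpha> > 0" unfolding \<alpha>_def using d1 by simp
  have cd0: "0 < c - \<delta>" "c - \<delta> < d" using \<delta> unfolding d_def by auto
  have \<alpha>\<beta>: "\<alpha> \<le> \<beta>" unfolding \<alpha>_def \<beta>_def using cd0 by simp
  define w where "w = (\<lambda>y::real. y powr (-r-1))"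
  define C where "C = \<alpha> powr (-r-1)"
  have pw: "((\<Sum>i\<le>m. b i * exp (- y) ^ i) * w y) - ((\<Sum>i\<le>n. a i * exp (- y) ^ i) * w y)
      \<le> C * indicator {\<alpha>..\<beta>} y + 4 * e * ((1 - exp (- y)) * w y)" if y: "y > 0" for y
  proof -
    define t where "t = exp (- y)"
    have t01: "0 < t" "t < 1" "t \<in> {0..1}" unfolding t_def using y by auto
    have w0: "w y \<ge> 0" unfolding w_def by simp
    have "(\<Sum>i\<le>m. b i * t ^ i) - (\<Sum>i\<le>n. a i * t ^ i) = (1 - t) * ((\<Sum>i\<le>nu. qu i * t ^ i) - (\<Sum>i\<le>nl. ql i * t ^ i))"
      using bm(1) an(1) by (simp add: algebra_simps)
    also have "\<dots> \<le> (1 - t) * ((Gu t + 2 * e) - (Gl t - 2 * e))"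
      using qu[rule_format, OF t01(3)] ql[rule_format, OF t01(3)] t01 by (intro mult_left_mono) auto
    also have "\<dots> = clip ((d - t) / \<delta>) - clip ((c - t) / \<delta>) + 4 * e * (1 - t)"
      using idu[of t] idl[of t] t01 by (simp add: algebra_simps)
    finally have D: "(\<Sum>i\<le>m. b i * t ^ i) - (\<Sum>i\<le>n. a i * t ^ i) \<le> clip ((d - t) / \<delta>) - clip ((c - t) / \<delta>) + 4 * e * (1 - t)" .
    have E: "(clip ((d - t) / \<delta>) - clip ((c - t) / \<delta>)) * w y \<le> C * indicator {\<alpha>..\<beta>} y"
    proof (cases "y < \<alpha>")
      case True
      then have "ln d < - y" unfolding \<alpha>_def by simp
      then have "d < t" unfolding t_def using d1 by (metis exp_less_cancel_iff exp_ln)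
      then have "(d - t) / \<delta> \<le> 0" "(c - t) / \<delta> \<le> 0" using \<delta> unfolding d_def by (simp_all add: divide_nonpos_pos)
      then show ?thesis using True unfolding clip_def by (simp add: indicator_def)
    next
      case False
      show ?thesis
      proof (cases "y > \<beta>")
        case True
        then have "- y < ln (c - \<delta>)" unfolding \<beta>_def by simp
        then have "t < c - \<delta>" unfolding t_def using cd0 by (metis exp_less_cancel_iff exp_ln)
        then have "(d - t) / \<delta> \<ge> 1" "(c - t) / \<delta> \<ge> 1" using \<delta> unfolding d_def by (simp_all add: field_simps)
        then show ?thesis using True unfolding clip_def by (simp add: indicator_def)
      next
        case False2: False
        then have ind: "indicator {\<alpha>..\<beta>} y = (1::real)" using False by (simp add: indicator_def)
        have "w y \<le> C" unfolding w_def C_def using False \<alpha>0 r by (intro powr_mono2') auto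
        moreover have "clip ((d - t) / \<delta>) - clip ((c - t) / \<delta>) \<le> 1"
          using clip01[of "(d - t) / \<delta>"] clip01[of "(c - t) / \<delta>"] by linarith
        then have "(clip ((d - t) / \<delta>) - clip ((c - t) / \<delta>)) * w y \<le> 1 * w y"
          using w0 by (rule mult_right_mono)
        ultimately show ?thesis using ind by simp
      qed
    qed
    have "((\<Sum>i\<le>m. b i * t ^ i) - (\<Sum>i\<le>n. a i * t ^ i)) * w y \<le> (clip ((d - t) / \<delta>) - clip ((c - t) / \<delta>) + 4 * e * (1 - t)) * w y"
      using D w0 by (rule mult_right_mono)
    also have "\<dots> = (clip ((d - t) / \<delta>) - clip ((c - t) / \<delta>)) * w y + 4 * e * ((1 - t) * w y)"
      by (simp add: algebra_simps)
    also have "\<dots> \<le> C * indicator {\<alpha>..\<beta>} y + 4 * e * ((1 - t) * w y)" using E by simp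
    finally show ?thesis unfolding t_def by (simp add: algebra_simps)
  qed
  have Rb: "set_integrable lborel {0<..} (\<lambda>y. (\<Sum>i\<le>m. b i * exp (- y) ^ i) * w y)"
    unfolding w_def by (rule ref_poly(1)[OF r bm(2)])
  have Ra: "set_integrable lborel {0<..} (\<lambda>y. (\<Sum>i\<le>n. a i * exp (- y) ^ i) * w y)"
    unfolding w_def by (rule ref_poly(1)[OF r an(2)])
  have Jint: "set_integrable lborel {0<..} (\<lambda>y. (1 - exp (- y)) * w y)"
    unfolding w_def by (rule J_integrable[OF r])
  have ind_eq: "indicator {0<..} y *\<^sub>R (C * indicator {\<alpha>..\<beta>} y) = C * indicator {\<alpha>..\<beta>} y" for y :: real
    using \<alpha>0 by (auto simp: indicator_def)
  have Iint: "set_integrable lborel {0<..} (\<lambda>y. C * indicator {\<alpha>..\<beta>} y)"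
    unfolding set_integrable_def ind_eq
    using \<alpha>\<beta> by (intro integrable_mult_right integrable_real_indicator) (auto simp: emeasure_lborel_Icc)
  have Ival: "(LINT y:{0<..}|lborel. C * indicator {\<alpha>..\<beta>} y) = C * (\<beta> - \<alpha>)"
    unfolding set_lebesgue_integral_def ind_eq using \<alpha>\<beta>
    by (simp add: measure_lborel_Icc)
  have "(LINT y:{0<..}|lborel. (\<Sum>i\<le>m. b i * exp (- y) ^ i) * w y) - (LINT y:{0<..}|lborel. (\<Sum>i\<le>n. a i * exp (- y) ^ i) * w y)
      = (LINT y:{0<..}|lborel. (\<Sum>i\<le>m. b i * exp (- y) ^ i) * w y - (\<Sum>i\<le>n. a i * exp (- y) ^ i) * w y)"
    using set_integral_diff(2)[OF Rb Ra] by simp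
  also have "\<dots> \<le> (LINT y:{0<..}|lborel. C * indicator {\<alpha>..\<beta>} y + 4 * e * ((1 - exp (- y)) * w y))"
    by (rule set_integral_mono[OF set_integral_diff(1)[OF Rb Ra]]) (use Iint Jint pw in auto)
  also have "\<dots> = C * (\<beta> - \<alpha>) + 4 * e * J"
    using set_integral_add(2)[OF Iint set_integrable_mult_right[OF Jint, of "4*e"]] Ival
    unfolding J_def w_def by simp
  also have "C * (\<beta> - \<alpha>) = \<phi> \<delta>"
    unfolding C_def \<alpha>_def \<beta>_def \<phi>_def d_def by (simp add: algebra_simps)
  finally have "(LINT y:{0<..}|lborel. (\<Sum>i\<le>m. b i * exp (- y) ^ i) * w y) - (LINT y:{0<..}|lborel. (\<Sum>i\<le>n. a i * exp (- y) ^ i) * w y) < \<epsilon>"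
    using \<delta>(1) eJ by linarith
  then show ?thesis
    unfolding w_def using an(2) bm(2) lo up by blast
qed

lemma poly_exp_integrable:
  fixes M :: "real measure"
  assumes "prob_space M" "sets M = sets borel" "AE x in M. 0 \<le> x" "0 \<le> s"
  shows "integrable M (\<lambda>x. \<Sum>i\<le>n. a i * exp (- s * x) ^ i)"
proof -
  interpret prob_space M by fact
  have [measurable_cong]: "sets M = sets borel" by (rule assms(2))
  have integ: "integrable M (\<lambda>x. exp (- s * x) ^ i)" for i
  proof (rule integrable_const_bound[where B=1])
    show "AE x in M. norm (exp (- s * x) ^ i) \<le> 1"
      using assms(3) by eventually_elim (use assms(4) in \<open>auto simp: mult_nonneg_nonneg power_le_one\<close>)
  qed measurable
  show ?thesis
    by (intro Bochner_Integration.integrable_sum integrable_mult_right integ)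
qed

lemma V_value:
  fixes r :: real
  assumes "0 < r" "r < 1"
  shows "set_integrable lborel {0<..} (\<lambda>y. (if exp (- y) < exp (-1) then 1 else 0) * y powr (-r-1))"
    and "(LINT y:{0<..}|lborel. (if exp (- y) < exp (-1) then 1 else 0) * y powr (-r-1)) = 1 / r"
proof -
  have eq: "indicator {0<..} y *\<^sub>R ((if exp (- y) < exp (-1) then 1 else 0) * y powr (-r-1))
        = indicator {1<..} y *\<^sub>R (y powr (-r-1))" for y :: real
    by (auto simp: indicator_def)
  have I: "set_integrable lborel {1<..} (\<lambda>y. y powr (-r-1))"
    using powr_integrable_inf(1)[of "-r-1" 1] assms by simp
  then show "set_integrable lborel {0<..} (\<lambda>y. (if exp (- y) < exp (-1) then 1 else 0) * y powr (-r-1))"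
    unfolding set_integrable_def eq .
  have "(LBINT y=ereal 1..\<infinity>. y powr (-r-1)) = 1 / r"
    using powr_integrable_inf(2)[of "-r-1" 1] assms by simp
  then have "(LINT y:{1<..}|lborel. y powr (-r-1)) = 1 / r"
    by (simp add: interval_lebesgue_integral_def)
  then show "(LINT y:{0<..}|lborel. (if exp (- y) < exp (-1) then 1 else 0) * y powr (-r-1)) = 1 / r"
    unfolding set_lebesgue_integral_def eq .
qed

lemma tauberian:
  fixes M :: "real measure" and r K :: real
  assumes M: "prob_space M" "sets M = sets borel" "AE x in M. 0 \<le> x"
    and r: "0 < r" "r < 1" and K: "K > 0"
    and lim: "((\<lambda>s. (1 - (\<integral>x. exp (- s * x) \<partial>M)) / s powr r) \<longlongrightarrow> K) (at_right 0)"
  shows "\<exists>C>0. ((\<lambda>s. measure M {1/s<..} / s powr r) \<longlongrightarrow> C) (at_right 0)"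
proof -
  interpret prob_space M by fact
  have [measurable_cong]: "sets M = sets borel" by (rule M(2))
  define R where "R = (\<lambda>n (a::nat\<Rightarrow>real). LINT y:{0<..}|lborel. (\<Sum>i\<le>n. a i * exp (- y) ^ i) * y powr (-r-1))"
  define F where "F = (\<lambda>n (a::nat\<Rightarrow>real) s. (\<integral>x. (\<Sum>i\<le>n. a i * exp (- s * x) ^ i) \<partial>M) / s powr r)"
  define T where "T = (\<lambda>s. measure M {1/s<..} / s powr r)"
  define J where "J = (LINT y:{0<..}|lborel. (1 - exp (- y)) * y powr (-r-1))"
  define V where "V = (LINT y:{0<..}|lborel. (if exp (- y) < exp (-1) then 1 else 0) * y powr (-r-1))"
  have V: "V = 1 / r" unfolding V_def by (rule V_value(2)[OF r])
  have Vint: "set_integrable lborel {0<..} (\<lambda>y. (if exp (- y) < exp (-1) then 1 else 0) * y powr (-r-1))"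
    by (rule V_value(1)[OF r])
  have Flim: "((F n a) \<longlongrightarrow> (K / J) * R n a) (at_right 0)" if "(\<Sum>i\<le>n. a i) = 0" "J \<noteq> 0" for n a
  proof -
    have "R n a = - J * (\<Sum>i\<le>n. a i * real i powr r)"
      unfolding R_def J_def by (rule ref_poly(2)[OF r that(1)])
    then have "(K / J) * R n a = - K * (\<Sum>i\<le>n. a i * real i powr r)" using that(2) by simp
    then show ?thesis unfolding F_def using laplace_poly_limit[OF M r(1) lim that(1)] by simp
  qed
  have Rmono: "R n a \<le> V" "V \<le> R m b"
    if "\<forall>t::real\<in>{0..1}. (\<Sum>i\<le>n. a i * t ^ i) \<le> (if t < exp (-1) then 1 else 0)"
       "\<forall>t::real\<in>{0..1}. (if t < exp (-1) then 1 else 0) \<le> (\<Sum>i\<le>m. b i * t ^ i)"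
       "(\<Sum>i\<le>n. a i) = 0" "(\<Sum>i\<le>m. b i) = 0" for n a m b
  proof -
    have e01: "exp (- y) \<in> {0..1}" if "y \<in> {0<..}" for y :: real using that by auto
    show "R n a \<le> V" unfolding R_def V_def
      by (rule set_integral_mono[OF ref_poly(1)[OF r that(3)] Vint])
         (use that(1) e01 in \<open>auto intro!: mult_right_mono simp del: exp_less_mono exp_less_cancel_iff exp_minus\<close>)
    show "V \<le> R m b" unfolding R_def V_def
      by (rule set_integral_mono[OF Vint ref_poly(1)[OF r that(4)]])
         (use that(2) e01 in \<open>auto intro!: mult_right_mono simp del: exp_less_mono exp_less_cancel_iff exp_minus\<close>)
  qed
  have TF: "T s \<le> F m b s" "F n a s \<le> T s"
    if "\<forall>t::real\<in>{0..1}. (\<Sum>i\<le>n. a i * t ^ i) \<le> (if t < exp (-1) then 1 else 0)"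
       "\<forall>t::real\<in>{0..1}. (if t < exp (-1) then 1 else 0) \<le> (\<Sum>i\<le>m. b i * t ^ i)"
       "s > 0" for n a m b s
  proof -
    have meq: "measure M {1/s<..} = (\<integral>x. (if exp (- s * x) < exp (-1) then 1 else 0) \<partial>M)"
    proof -
      have "(\<lambda>x. (if exp (- s * x) < exp (-1) then 1 else 0::real)) = indicator {1/s<..}"
        using that(3) by (auto simp: indicator_def field_simps)
      then show ?thesis by (simp add: M(2) sets_eq_imp_space_eq[OF M(2)])
    qed
    have indint: "integrable M (\<lambda>x. (if exp (- s * x) < exp (-1) then 1 else 0::real))"
      by (rule integrable_const_bound[where B=1]) auto
    have AEt: "AE x in M. exp (- s * x) \<in> {0..1}"
      using M(3) by eventually_elim (use that(3) in \<open>auto simp: mult_nonneg_nonneg\<close>)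
    have sr: "s powr r > 0" using that(3) by simp
    have "measure M {1/s<..} \<le> (\<integral>x. (\<Sum>i\<le>m. b i * exp (- s * x) ^ i) \<partial>M)"
      unfolding meq
    proof (rule integral_mono_AE[OF indint poly_exp_integrable[OF M]])
      show "AE x in M. (if exp (- s * x) < exp (-1) then 1 else 0) \<le> (\<Sum>i\<le>m. b i * exp (- s * x) ^ i)"
        using AEt by eventually_elim (rule that(2)[rule_format])
    qed (use that(3) in auto)
    then show "T s \<le> F m b s" unfolding T_def F_def using sr by (simp add: divide_right_mono)
    have "(\<integral>x. (\<Sum>i\<le>n. a i * exp (- s * x) ^ i) \<partial>M) \<le> measure M {1/s<..}"
      unfolding meq
    proof (rule integral_mono_AE[OF poly_exp_integrable[OF M] indint])
      show "AE x in M. (\<Sum>i\<le>n. a i * exp (- s * x) ^ i) \<le> (if exp (- s * x) < exp (-1) then 1 else 0)"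
        using AEt by eventually_elim (rule that(1)[rule_format])
    qed (use that(3) in auto)
    then show "F n a s \<le> T s" unfolding T_def F_def using sr by (simp add: divide_right_mono)
  qed
  have J0: "J \<ge> 0" unfolding J_def set_lebesgue_integral_def
    by (intro integral_nonneg_AE AE_I2) (auto simp: indicator_def)
  have Jpos: "J > 0"
  proof (rule ccontr)
    assume "\<not> J > 0"
    then have J00: "J = 0" using J0 by simp
    obtain a n b m where ab: "(\<Sum>i\<le>n. a i) = 0" "(\<Sum>i\<le>m. b i) = 0"
       "\<forall>t::real\<in>{0..1}. (\<Sum>i\<le>n. a i * t ^ i) \<le> (if t < exp (-1) then 1 else 0)"
       "\<forall>t::real\<in>{0..1}. (if t < exp (-1) then 1 else 0) \<le> (\<Sum>i\<le>m. b i * t ^ i)"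
      using approx_main[OF r zero_less_one] by (elim exE conjE) blast
    have "R m b = - J * (\<Sum>i\<le>m. b i * real i powr r)"
      unfolding R_def J_def by (rule ref_poly(2)[OF r ab(2)])
    then have "R m b = 0" using J00 by simp
    moreover have "V \<le> R m b" by (rule Rmono(2)[OF ab(3,4,1,2)])
    ultimately show False using V r by simp
  qed
  define C where "C = K / J * V"
  have Cpos: "C > 0" unfolding C_def V using K Jpos r by simp
  have KJ: "K / J > 0" using K Jpos by simp
  have "(T \<longlongrightarrow> C) (at_right 0)"
  proof (rule order_tendstoI)
    fix u assume u: "u > C"
    define \<epsilon> where "\<epsilon> = (u - C) / (2 * (K / J))"
    have \<epsilon>: "\<epsilon> > 0" unfolding \<epsilon>_def using u KJ by (intro divide_pos_pos) auto
    obtain a n b m where ab: "(\<Sum>i\<le>n. a i) = 0" "(\<Sum>i\<le>m. b i) = 0"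
       "\<forall>t::real\<in>{0..1}. (\<Sum>i\<le>n. a i * t ^ i) \<le> (if t < exp (-1) then 1 else 0)"
       "\<forall>t::real\<in>{0..1}. (if t < exp (-1) then 1 else 0) \<le> (\<Sum>i\<le>m. b i * t ^ i)"
       "R m b - R n a < \<epsilon>"
      using approx_main[OF r \<epsilon>] unfolding R_def by (elim exE conjE) blast
    have "R m b < V + \<epsilon>" using Rmono(1)[OF ab(3,4,1,2)] ab(5) by simp
    then have "(K / J) * R m b < (K / J) * (V + \<epsilon>)" using KJ by (rule mult_strict_left_mono)
    also have "\<dots> = C + (u - C) / 2"
    proof -
      have "(K / J) * \<epsilon> = (u - C) / 2" unfolding \<epsilon>_def using K Jpos by (simp add: field_simps)
      then show ?thesis by (simp add: distrib_left C_def)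
    qed
    also have "\<dots> < u" using u by (simp add: field_simps)
    finally have "eventually (\<lambda>s. F m b s < u) (at_right 0)"
      using order_tendstoD(2)[OF Flim[OF ab(2)]] Jpos by simp
    moreover have "eventually (\<lambda>s. s > 0) (at_right (0::real))" by (simp add: eventually_at_right_less)
    ultimately show "eventually (\<lambda>s. T s < u) (at_right 0)"
      by eventually_elim (use TF(1)[OF ab(3,4)] in force)
  next
    fix u assume u: "u < C"
    define \<epsilon> where "\<epsilon> = (C - u) / (2 * (K / J))"
    have \<epsilon>: "\<epsilon> > 0" unfolding \<epsilon>_def using u KJ by (intro divide_pos_pos) auto
    obtain a n b m where ab: "(\<Sum>i\<le>n. a i) = 0" "(\<Sum>i\<le>m. b i) = 0"
       "\<forall>t::real\<in>{0..1}. (\<Sum>i\<le>n. a i * t ^ i) \<le> (if t < exp (-1) then 1 else 0)"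
       "\<forall>t::real\<in>{0..1}. (if t < exp (-1) then 1 else 0) \<le> (\<Sum>i\<le>m. b i * t ^ i)"
       "R m b - R n a < \<epsilon>"
      using approx_main[OF r \<epsilon>] unfolding R_def by (elim exE conjE) blast
    have "V - \<epsilon> < R n a" using Rmono(2)[OF ab(3,4,1,2)] ab(5) by simp
    then have "(K / J) * (V - \<epsilon>) < (K / J) * R n a" using KJ by (rule mult_strict_left_mono)
    moreover have "(K / J) * (V - \<epsilon>) = C - (C - u) / 2"
    proof -
      have "(K / J) * \<epsilon> = (C - u) / 2" unfolding \<epsilon>_def using K Jpos by (simp add: field_simps)
      then show ?thesis by (simp add: right_diff_distrib C_def)
    qed
    moreover have "u < C - (C - u) / 2" using u by (simp add: field_simps)
    ultimately have "u < (K / J) * R n a" by (metis order.strict_trans)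
    then have "eventually (\<lambda>s. u < F n a s) (at_right 0)"
      using order_tendstoD(1)[OF Flim[OF ab(1)]] Jpos by simp
    moreover have "eventually (\<lambda>s. s > 0) (at_right (0::real))" by (simp add: eventually_at_right_less)
    ultimately show "eventually (\<lambda>s. u < T s) (at_right 0)"
      by eventually_elim (use TF(2)[OF ab(3,4)] in force)
  qed
  then show ?thesis using Cpos unfolding T_def by blast
qed

lemma LBINT_0_x_eq:
  fixes f :: "real \<Rightarrow> real"
  assumes "0 < x"
  shows "(LBINT t=0..x. f t) = (LINT t:{0<..<x}|lborel. f t)"
  using assms by (simp add: interval_lebesgue_integral_def zero_ereal_def)

lemma LBINT_0_1_eq:
  fixes f :: "real \<Rightarrow> real"
  shows "(LBINT t=0..1. f t) = (LINT t:{0<..<1}|lborel. f t)"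
  by (simp add: interval_lebesgue_integral_def zero_ereal_def one_ereal_def)

lemma incBeta_bounds:
  fixes a v x :: real
  assumes a: "0 < a" and x: "0 < x" "x < 1"
  shows "min 1 ((1-x) powr (v-1)) * (x powr a / a) \<le> incBeta x a v"
    and "incBeta x a v \<le> max 1 ((1-x) powr (v-1)) * (x powr a / a)"
proof -
  define m where "m = min 1 ((1-x) powr (v-1))"
  define M where "M = max 1 ((1-x) powr (v-1))"
  have bnd: "m \<le> (1-t) powr (v-1) \<and> (1-t) powr (v-1) \<le> M" if t: "t \<in> {0<..<x}" for t
  proof (cases "v \<ge> 1")
    case True
    have "(1-x) powr (v-1) \<le> (1-t) powr (v-1)" using t x True by (intro powr_mono2) auto
    moreover have "(1-t) powr (v-1) \<le> 1" using t x True by (intro powr_le1) auto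
    ultimately show ?thesis unfolding m_def M_def by auto
  next
    case False
    have "(1-t) powr (v-1) \<le> (1-x) powr (v-1)" using t x False by (intro powr_mono2') auto
    moreover have "1 powr (v-1) \<le> (1-t) powr (v-1)" using t x False by (intro powr_mono2') auto
    ultimately show ?thesis unfolding m_def M_def by auto
  qed
  have m0: "0 \<le> m" unfolding m_def by simp
  have "m \<le> M" unfolding m_def M_def by simp
  have P: "set_integrable lborel {0<..<x} (\<lambda>t. t powr (a-1))"
    using powr_integrable_0(1)[of "a-1" x] a x by simp
  have Pv: "(LINT t:{0<..<x}|lborel. t powr (a-1)) = x powr a / a"
    using powr_integrable_0(2)[of "a-1" x] a x by (simp add: LBINT_0_x_eq)
  have meas: "set_borel_measurable lborel {0<..<x} (\<lambda>t. t powr (a-1) * (1-t) powr (v-1))"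
    unfolding set_borel_measurable_def by measurable
  have I: "set_integrable lborel {0<..<x} (\<lambda>t. t powr (a-1) * (1-t) powr (v-1))"
  proof (rule set_integrable_bound[OF set_integrable_mult_right[OF P, of M] meas])
    show "AE t in lborel. t \<in> {0<..<x} \<longrightarrow> norm (t powr (a-1) * (1-t) powr (v-1)) \<le> norm (M * t powr (a-1))"
    proof (rule AE_I2, rule impI)
      fix t assume t: "t \<in> {0<..<x}"
      have "t powr (a-1) * (1-t) powr (v-1) \<le> t powr (a-1) * M" using bnd[OF t] by (intro mult_left_mono) auto
      then show "norm (t powr (a-1) * (1-t) powr (v-1)) \<le> norm (M * t powr (a-1))"
        using t \<open>m \<le> M\<close> m0 by (simp add: mult.commute)
    qed
  qed
  have eq: "incBeta x a v = (LINT t:{0<..<x}|lborel. t powr (a-1) * (1-t) powr (v-1))"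
    unfolding incBeta_def using x by (simp add: LBINT_0_x_eq)
  have "(LINT t:{0<..<x}|lborel. m * t powr (a-1)) \<le> (LINT t:{0<..<x}|lborel. t powr (a-1) * (1-t) powr (v-1))"
  proof (rule set_integral_mono[OF set_integrable_mult_right[OF P] I])
    fix t assume t: "t \<in> {0<..<x}"
    have "t powr (a-1) * m \<le> t powr (a-1) * (1-t) powr (v-1)"
      using bnd[OF t] by (intro mult_left_mono) auto
    then show "m * t powr (a-1) \<le> t powr (a-1) * (1-t) powr (v-1)" by (simp add: mult.commute)
  qed
  then show "m * (x powr a / a) \<le> incBeta x a v" unfolding eq using Pv by simp
  have "(LINT t:{0<..<x}|lborel. t powr (a-1) * (1-t) powr (v-1)) \<le> (LINT t:{0<..<x}|lborel. M * t powr (a-1))"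
  proof (rule set_integral_mono[OF I set_integrable_mult_right[OF P]])
    fix t assume t: "t \<in> {0<..<x}"
    have "t powr (a-1) * (1-t) powr (v-1) \<le> t powr (a-1) * M"
      using bnd[OF t] by (intro mult_left_mono) auto
    then show "t powr (a-1) * (1-t) powr (v-1) \<le> M * t powr (a-1)" by (simp add: mult.commute)
  qed
  then show "incBeta x a v \<le> M * (x powr a / a)" unfolding eq using Pv by simp
qed

lemma incBeta_lim:
  fixes a v :: real
  assumes a: "0 < a"
  shows "((\<lambda>x. incBeta x a v / x powr a) \<longlongrightarrow> 1 / a) (at_right 0)"
proof (rule tendsto_sandwich)
  have ev: "eventually (\<lambda>x. 0 < x \<and> x < 1) (at_right (0::real))"
    unfolding eventually_at_right_field by (intro exI[of _ 1]) auto
  show "eventually (\<lambda>x. min 1 ((1-x) powr (v-1)) / a \<le> incBeta x a v / x powr a) (at_right 0)"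
    using ev
  proof eventually_elim
    case (elim x)
    then have "min 1 ((1-x) powr (v-1)) * (x powr a / a) \<le> incBeta x a v" by (intro incBeta_bounds(1) a) auto
    then show ?case using elim a by (simp add: field_simps)
  qed
  show "eventually (\<lambda>x. incBeta x a v / x powr a \<le> max 1 ((1-x) powr (v-1)) / a) (at_right 0)"
    using ev
  proof eventually_elim
    case (elim x)
    then have "incBeta x a v \<le> max 1 ((1-x) powr (v-1)) * (x powr a / a)" by (intro incBeta_bounds(2) a) auto
    then show ?case using elim a by (simp add: field_simps)
  qed
  have "((\<lambda>x. (1-x) powr (v-1)) \<longlongrightarrow> (1-0) powr (v-1)) (at_right (0::real))"
    by (intro tendsto_intros) auto
  then have L: "((\<lambda>x. (1-x) powr (v-1)) \<longlongrightarrow> 1) (at_right (0::real))" by simp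
  have "((\<lambda>x. min 1 ((1-x) powr (v-1)) / a) \<longlongrightarrow> min 1 1 / a) (at_right 0)"
    using a by (intro tendsto_intros L) auto
  then show "((\<lambda>x. min 1 ((1-x) powr (v-1)) / a) \<longlongrightarrow> 1 / a) (at_right 0)" by simp
  have "((\<lambda>x. max 1 ((1-x) powr (v-1)) / a) \<longlongrightarrow> max 1 1 / a) (at_right 0)"
    using a by (intro tendsto_intros L) auto
  then show "((\<lambda>x. max 1 ((1-x) powr (v-1)) / a) \<longlongrightarrow> 1 / a) (at_right 0)" by simp
qed

lemma T1_lim:
  fixes a v r \<theta> p q :: real
  assumes a: "0 < a"
  shows "((\<lambda>s. s powr (r - a) * (s + 1) powr (a - \<theta> - r) * p * q * regIncBeta (s / (s + 1)) a v / s powr r)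
          \<longlongrightarrow> p * q / (a * Beta a v)) (at_right 0)"
proof -
  have fl: "filterlim (\<lambda>s::real. s / (s + 1)) (at_right 0) (at_right 0)"
  proof -
    have "((\<lambda>s::real. s / (s + 1)) \<longlongrightarrow> 0 / (0 + 1)) (at_right 0)" by (intro tendsto_intros) auto
    moreover have "eventually (\<lambda>s::real. s / (s + 1) \<in> {0<..} \<and> s / (s + 1) \<noteq> 0) (at_right 0)"
      by (auto simp: eventually_at_right_less eventually_at_filter)
    ultimately show ?thesis by (auto simp: filterlim_at)
  qed
  have L1: "((\<lambda>s. incBeta (s / (s + 1)) a v / (s / (s + 1)) powr a) \<longlongrightarrow> 1 / a) (at_right 0)"
    using filterlim_compose[OF incBeta_lim[OF a] fl] .
  have L2: "((\<lambda>s::real. (s + 1) powr (- \<theta> - r)) \<longlongrightarrow> (0 + 1) powr (- \<theta> - r)) (at_right 0)"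
    by (intro tendsto_intros) auto
  have "((\<lambda>s. p * q / Beta a v * (s + 1) powr (- \<theta> - r) * (incBeta (s / (s + 1)) a v / (s / (s + 1)) powr a))
          \<longlongrightarrow> p * q / Beta a v * (0 + 1) powr (- \<theta> - r) * (1 / a)) (at_right 0)"
    by (intro tendsto_intros L1 L2)
  moreover have "eventually (\<lambda>s. p * q / Beta a v * (s + 1) powr (- \<theta> - r) * (incBeta (s / (s + 1)) a v / (s / (s + 1)) powr a)
     = s powr (r - a) * (s + 1) powr (a - \<theta> - r) * p * q * regIncBeta (s / (s + 1)) a v / s powr r) (at_right 0)"
  proof (rule eventually_mono[OF eventually_at_right_less])
    fix s :: real assume s: "0 < s"
    have e1: "(s / (s + 1)) powr a = s powr a / (s + 1) powr a" using s by (simp add: powr_divide)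
    have e2: "s powr (r - a) = s powr r / s powr a" by (simp add: powr_diff)
    have e3: "(s + 1) powr (a - \<theta> - r) = (s + 1) powr a * (s + 1) powr (- \<theta> - r)"
      by (simp add: powr_add[symmetric] algebra_simps)
    have p1: "s powr a > 0" "s powr r > 0" "(s + 1) powr a > 0" using s by auto
    show "p * q / Beta a v * (s + 1) powr (- \<theta> - r) * (incBeta (s / (s + 1)) a v / (s / (s + 1)) powr a)
     = s powr (r - a) * (s + 1) powr (a - \<theta> - r) * p * q * regIncBeta (s / (s + 1)) a v / s powr r"
      unfolding e1 e2 e3 regIncBeta_def using p1 by (simp add: field_simps)
  qed
  ultimately have "((\<lambda>s. s powr (r - a) * (s + 1) powr (a - \<theta> - r) * p * q * regIncBeta (s / (s + 1)) a v / s powr r)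
          \<longlongrightarrow> p * q / Beta a v * (0 + 1) powr (- \<theta> - r) * (1 / a)) (at_right 0)"
    by (rule tendsto_cong[THEN iffD1, rotated])
  moreover have "p * q / Beta a v * (0 + 1) powr (- \<theta> - r) * (1 / a) = p * q / (a * Beta a v)" by simp
  ultimately show ?thesis by metis
qed

lemma abs_set_integral_le:
  fixes f g :: "'a \<Rightarrow> real"
  assumes gi: "set_integrable M A g" and fg: "\<And>x. x \<in> A \<Longrightarrow> \<bar>f x\<bar> \<le> g x"
  shows "\<bar>LINT x:A|M. f x\<bar> \<le> (LINT x:A|M. g x)"
proof (cases "set_integrable M A f")
  case True
  have "\<bar>LINT x:A|M. f x\<bar> \<le> (\<integral>x. \<bar>indicator A x *\<^sub>R f x\<bar> \<partial>M)"
    unfolding set_lebesgue_integral_def by (rule integral_abs_bound)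
  also have "\<dots> \<le> (LINT x:A|M. g x)"
    unfolding set_lebesgue_integral_def
    using True gi fg unfolding set_integrable_def
    by (intro integral_mono) (auto simp: indicator_def)
  finally show ?thesis .
next
  case False
  then have "(LINT x:A|M. f x) = 0"
    unfolding set_lebesgue_integral_def set_integrable_def by (rule not_integrable_integral_eq)
  moreover have "0 \<le> (LINT x:A|M. g x)"
    unfolding set_lebesgue_integral_def
    using fg by (intro integral_nonneg_AE AE_I2) (auto simp: indicator_def intro: order_trans[OF abs_ge_zero])
  ultimately show ?thesis by simp
qed

lemma set_integrable_cong_on:
  fixes f g :: "'a \<Rightarrow> real"
  assumes "\<And>x. x \<in> A \<Longrightarrow> f x = g x" "set_integrable M A f"
  shows "set_integrable M A g"
proof -
  have "integrable M (\<lambda>x. indicator A x *\<^sub>R f x)" using assms(2) unfolding set_integrable_def .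
  moreover have "(\<lambda>x. indicator A x *\<^sub>R f x) = (\<lambda>x. indicator A x *\<^sub>R g x)" using assms(1) by (auto simp: indicator_def)
  ultimately show ?thesis unfolding set_integrable_def by simp
qed

lemma inv_powr_bound:
  fixes z q :: real
  assumes "1 \<le> z" "z \<le> 2"
  shows "1 / z powr q \<le> 2 powr \<bar>q\<bar>"
proof -
  have "1 / z powr q = z powr (- q)" using assms by (simp add: powr_minus divide_inverse)
  also have "\<dots> \<le> 2 powr \<bar>q\<bar>"
  proof (cases "q \<le> 0")
    case True
    then have "z powr (- q) \<le> 2 powr (- q)" using assms by (intro powr_mono2) auto
    then show ?thesis using True by simp
  next
    case False
    then have "z powr (- q) \<le> 1 powr (- q)" using assms by (intro powr_mono2') auto
    then have "z powr (- q) \<le> 1" by simp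
    moreover have "1 \<le> 2 powr \<bar>q\<bar>" by (simp add: ge_one_powr_ge_zero)
    ultimately show ?thesis by linarith
  qed
  finally show ?thesis .
qed

lemma Y_integrable:
  fixes r :: real assumes "0 < r" "r < 1"
  shows "set_integrable lborel {0<..<1} (\<lambda>y. (1 - y) powr (- r))"
proof -
  have "set_integrable lborel {0..1} (\<lambda>t::real. t powr (1 - 1) * (1 - t) powr ((1 - r) - 1))"
    using integrable_Beta[of 1 "1 - r"] assms by simp
  then have "set_integrable lborel {0<..<1} (\<lambda>t::real. t powr (1 - 1) * (1 - t) powr ((1 - r) - 1))"
    by (rule set_integrable_subset) auto
  then show ?thesis by (rule set_integrable_cong_on[rotated]) auto
qed

lemma Bu_integrable:
  fixes r a :: real assumes "0 < r" "r < 1" "0 < a"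
  shows "set_integrable lborel {0<..<1} (\<lambda>u. u powr (1 - r) * (1 - u) powr (a - 1))"
proof -
  have "set_integrable lborel {0..1} (\<lambda>t::real. t powr ((2 - r) - 1) * (1 - t) powr (a - 1))"
    using integrable_Beta[of "2 - r" a] assms by simp
  then have "set_integrable lborel {0<..<1} (\<lambda>t::real. t powr ((2 - r) - 1) * (1 - t) powr (a - 1))"
    by (rule set_integrable_subset) auto
  then show ?thesis by (rule set_integrable_cong_on[rotated]) auto
qed

lemma D_bound:
  fixes \<theta> r a s :: real
  assumes r: "0 < r" "r < 1" and a: "0 < a" and s: "0 < s" "s \<le> 1"
  shows "\<bar>LBINT u=0..1. (LBINT y=0..1. u powr (1 - r) * (1 - u) powr (a - 1)
            / ((1 - y) powr r * (1 + s * y * u) powr (\<theta> + 1)))\<bar>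
         \<le> 2 powr \<bar>\<theta> + 1\<bar> * (LINT y:{0<..<1}|lborel. (1 - y) powr (- r))
             * (LINT u:{0<..<1}|lborel. u powr (1 - r) * (1 - u) powr (a - 1))"
proof -
  define Y where "Y = (LINT y:{0<..<1}|lborel. (1 - y) powr (- r))"
  define Q where "Q = 2 powr \<bar>\<theta> + 1\<bar>"
  define P where "P = (\<lambda>u::real. u powr (1 - r) * (1 - u) powr (a - 1))"
  have Yi: "set_integrable lborel {0<..<1} (\<lambda>y. (1 - y) powr (- r))" by (rule Y_integrable[OF r])
  have Pi: "set_integrable lborel {0<..<1} P" unfolding P_def by (rule Bu_integrable[OF r a])
  have inner: "\<bar>LINT y:{0<..<1}|lborel. u powr (1 - r) * (1 - u) powr (a - 1)
            / ((1 - y) powr r * (1 + s * y * u) powr (\<theta> + 1))\<bar> \<le> P u * Q * Y" if u: "u \<in> {0<..<1}" for u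
  proof -
    have "\<bar>LINT y:{0<..<1}|lborel. u powr (1 - r) * (1 - u) powr (a - 1)
            / ((1 - y) powr r * (1 + s * y * u) powr (\<theta> + 1))\<bar> \<le> (LINT y:{0<..<1}|lborel. (P u * Q) * (1 - y) powr (- r))"
    proof (rule abs_set_integral_le[OF set_integrable_mult_right[OF Yi]])
      fix y :: real assume y: "y \<in> {0<..<1}"
      have z: "1 \<le> 1 + s * y * u" "1 + s * y * u \<le> 2"
        using s y u by (auto intro!: mult_nonneg_nonneg) (smt (verit) mult_le_one mult_nonneg_nonneg)
      have Z: "1 / (1 + s * y * u) powr (\<theta> + 1) \<le> Q" unfolding Q_def by (rule inv_powr_bound[OF z])
      have Z0: "0 \<le> 1 / (1 + s * y * u) powr (\<theta> + 1)" by simp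
      have P0: "0 \<le> P u" unfolding P_def by simp
      have Yy: "1 / (1 - y) powr r = (1 - y) powr (- r)" using y by (simp add: powr_minus divide_inverse)
      have E1: "u powr (1 - r) * (1 - u) powr (a - 1) / ((1 - y) powr r * (1 + s * y * u) powr (\<theta> + 1))
          = P u * (1 - y) powr (- r) * (1 / (1 + s * y * u) powr (\<theta> + 1))"
        unfolding P_def Yy[symmetric] by simp
      have E2: "\<bar>P u * (1 - y) powr (- r) * (1 / (1 + s * y * u) powr (\<theta> + 1))\<bar> = P u * (1 - y) powr (- r) * (1 / (1 + s * y * u) powr (\<theta> + 1))"
        using P0 Z0 by simp
      have E3: "P u * (1 - y) powr (- r) * (1 / (1 + s * y * u) powr (\<theta> + 1)) \<le> P u * (1 - y) powr (- r) * Q"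
        using Z P0 by (intro mult_left_mono) auto
      have E4: "P u * (1 - y) powr (- r) * Q = P u * Q * (1 - y) powr (- r)" by (simp add: mult_ac)
      show "\<bar>u powr (1 - r) * (1 - u) powr (a - 1) / ((1 - y) powr r * (1 + s * y * u) powr (\<theta> + 1))\<bar>
          \<le> P u * Q * (1 - y) powr (- r)" unfolding E1 E2 using E3 E4 by linarith
    qed
    also have "\<dots> = P u * Q * Y" unfolding Y_def by simp
    finally show ?thesis .
  qed
  have "\<bar>LINT u:{0<..<1}|lborel. (LINT y:{0<..<1}|lborel. u powr (1 - r) * (1 - u) powr (a - 1)
            / ((1 - y) powr r * (1 + s * y * u) powr (\<theta> + 1)))\<bar> \<le> (LINT u:{0<..<1}|lborel. P u * (Q * Y))"
    by (rule abs_set_integral_le[OF set_integrable_mult_left[OF Pi]]) (use inner in \<open>simp add: mult_ac\<close>)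
  also have "\<dots> = Q * Y * (LINT u:{0<..<1}|lborel. P u)" by (simp add: mult_ac)
  finally show ?thesis unfolding Q_def Y_def P_def LBINT_0_1_eq by (simp add: mult_ac)
qed

lemma Beta_pos_real: "0 < x \<Longrightarrow> 0 < y \<Longrightarrow> Beta x y > (0::real)"
  by (simp add: Beta_def Gamma_real_pos)

lemma phi_asymp:
  fixes \<theta> r a :: real
  assumes "\<theta> < 1/2" "0 < r" "r < 1" "\<theta> + r < 1" "0 < a" "a \<le> 1"
  shows "\<exists>K>0. ((\<lambda>s. (1 - Phi \<theta> r a s) / s powr r) \<longlongrightarrow> K) (at_right 0)"
proof -
  define p where "p = a + 1 - \<theta> - r"
  define q where "q = Beta (1 - \<theta>) (a + 1 - r)"
  define v where "v = 1 - \<theta> - r"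
  define D where "D = (\<lambda>s. LBINT u=0..1. (LBINT y=0..1. u powr (1 - r) * (1 - u) powr (a - 1)
            / ((1 - y) powr r * (1 + s * y * u) powr (\<theta> + 1))))"
  define Dm where "Dm = 2 powr \<bar>\<theta> + 1\<bar> * (LINT y:{0<..<1}|lborel. (1 - y) powr (- r))
             * (LINT u:{0<..<1}|lborel. u powr (1 - r) * (1 - u) powr (a - 1))"
  define B' where "B' = Beta (1 - r) a"
  have T1: "((\<lambda>s. s powr (r - a) * (s + 1) powr (a - \<theta> - r) * p * q * regIncBeta (s / (s + 1)) a v / s powr r)
          \<longlongrightarrow> p * q / (a * Beta a v)) (at_right 0)"
    by (rule T1_lim) (use assms in auto)
  have T2: "((\<lambda>s. s * \<theta> / B' * D s / s powr r) \<longlongrightarrow> 0) (at_right 0)"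
  proof (rule Lim_null_comparison)
    have "eventually (\<lambda>s::real. 0 < s \<and> s \<le> 1) (at_right 0)"
      unfolding eventually_at_right_field by (intro exI[of _ 1]) auto
    then show "eventually (\<lambda>s. norm (s * \<theta> / B' * D s / s powr r) \<le> s powr (1 - r) * (\<bar>\<theta> / B'\<bar> * Dm)) (at_right 0)"
    proof eventually_elim
      case (elim s)
      have Db: "\<bar>D s\<bar> \<le> Dm" unfolding D_def Dm_def by (rule D_bound) (use assms elim in auto)
      have e: "s * \<theta> / B' * D s / s powr r = s powr (1 - r) * (\<theta> / B') * D s"
        using elim by (simp add: powr_diff field_simps)
      have "norm (s * \<theta> / B' * D s / s powr r) = s powr (1 - r) * (\<bar>\<theta> / B'\<bar> * \<bar>D s\<bar>)"
        unfolding e by (simp add: abs_mult)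
      also have "\<dots> \<le> s powr (1 - r) * (\<bar>\<theta> / B'\<bar> * Dm)"
        using Db by (intro mult_left_mono) auto
      finally show ?case .
    qed
    have "((\<lambda>s::real. s powr (1 - r) * (\<bar>\<theta> / B'\<bar> * Dm)) \<longlongrightarrow> 0 powr (1 - r) * (\<bar>\<theta> / B'\<bar> * Dm)) (at_right 0)"
      using assms by (intro tendsto_intros tendsto_powr') (auto simp: eventually_at_right_less eventually_at_filter)
    then show "((\<lambda>s::real. s powr (1 - r) * (\<bar>\<theta> / B'\<bar> * Dm)) \<longlongrightarrow> 0) (at_right 0)"
      using assms by simp
  qed
  have "((\<lambda>s. s powr (r - a) * (s + 1) powr (a - \<theta> - r) * p * q * regIncBeta (s / (s + 1)) a v / s powr r
            + s * \<theta> / B' * D s / s powr r) \<longlongrightarrow> p * q / (a * Beta a v) + 0) (at_right 0)"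
    by (rule tendsto_add[OF T1 T2])
  moreover have "(1 - Phi \<theta> r a s) / s powr r = s powr (r - a) * (s + 1) powr (a - \<theta> - r) * p * q * regIncBeta (s / (s + 1)) a v / s powr r
            + s * \<theta> / B' * D s / s powr r" for s
    unfolding Phi_def p_def q_def v_def D_def B'_def by (simp add: add_divide_distrib)
  ultimately have lim: "((\<lambda>s. (1 - Phi \<theta> r a s) / s powr r) \<longlongrightarrow> p * q / (a * Beta a v)) (at_right 0)"
    by simp
  have "p * q / (a * Beta a v) > 0"
    unfolding p_def q_def v_def using assms
    by (intro divide_pos_pos mult_pos_pos Beta_pos_real) auto
  with lim show ?thesis by blast
qed

theorem theorem5:
  fixes \<theta> \<rho> \<alpha> a :: real and M :: "real measure"
  assumes "\<theta> < 1/2" and "1/2 < \<rho>" and "\<rho> < 1" and "\<theta> + \<rho> < 1"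
    and "1/2 < \<alpha>" and "\<alpha> \<le> 1"
    and "a = \<rho> \<or> a = \<alpha>"
    and "prob_space M" and "sets M = sets borel"
    and "AE x in M. 0 \<le> x"
    and "\<And>s. 0 \<le> s \<Longrightarrow> (\<integral>x. exp (- s * x) \<partial>M) = Phi \<theta> \<rho> a s"
  shows "\<exists>C>0. (\<lambda>x. 1 - cdf M x) \<sim>[at_top] (\<lambda>x. C * x powr (- \<rho>))"
proof -
  interpret prob_space M by fact
  have a: "0 < a" "a \<le> 1" using assms(2,3,5,6,7) by auto
  have r: "0 < \<rho>" "\<rho> < 1" using assms(2,3) by auto
  obtain K where K: "K > 0" "((\<lambda>s. (1 - Phi \<theta> \<rho> a s) / s powr \<rho>) \<longlongrightarrow> K) (at_right 0)"
    using phi_asymp[OF assms(1) r assms(4) a] by blast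
  have "eventually (\<lambda>s. (1 - Phi \<theta> \<rho> a s) / s powr \<rho> = (1 - (\<integral>x. exp (- s * x) \<partial>M)) / s powr \<rho>) (at_right 0)"
    using assms(11) by (auto simp: eventually_at_right_less eventually_at_filter)
  then have lim: "((\<lambda>s. (1 - (\<integral>x. exp (- s * x) \<partial>M)) / s powr \<rho>) \<longlongrightarrow> K) (at_right 0)"
    using K(2) by (rule tendsto_cong[THEN iffD1])
  obtain C where C: "C > 0" "((\<lambda>s. measure M {1/s<..} / s powr \<rho>) \<longlongrightarrow> C) (at_right 0)"
    using tauberian[OF assms(8,9,10) r K(1) lim] by blast
  have "((\<lambda>x. measure M {1 / inverse x<..} / inverse x powr \<rho>) \<longlongrightarrow> C) at_top"
    using filterlim_compose[OF C(2) filterlim_inverse_at_right_top] .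
  moreover have "eventually (\<lambda>x. measure M {1 / inverse x<..} / inverse x powr \<rho> = (1 - cdf M x) / x powr (- \<rho>)) at_top"
  proof (rule eventually_mono[OF eventually_gt_at_top[of 0]])
    fix x :: real assume x: "0 < x"
    have sp: "space M = UNIV" using sets_eq_imp_space_eq[OF assms(9)] by simp
    have "1 - cdf M x = 1 - prob {..x}" by (simp add: cdf_def)
    also have "\<dots> = prob (space M - {..x})" using assms(9) by (subst prob_compl) auto
    also have "space M - {..x} = {x<..}" using sp by auto
    finally have "1 - cdf M x = prob {x<..}" .
    moreover have "inverse x powr \<rho> = inverse (x powr \<rho>)"
      using x by (simp add: powr_def ln_inverse exp_minus)
    ultimately show "measure M {1 / inverse x<..} / inverse x powr \<rho> = (1 - cdf M x) / x powr (- \<rho>)"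
      using x by (simp add: powr_minus divide_inverse)
  qed
  ultimately have "((\<lambda>x. (1 - cdf M x) / x powr (- \<rho>)) \<longlongrightarrow> C) at_top"
    by (rule tendsto_cong[THEN iffD1, rotated])
  then have "(\<lambda>x. 1 - cdf M x) \<sim>[at_top] (\<lambda>x. C * x powr (- \<rho>))"
    using C(1) by (intro asymp_equivI'_const) auto
  then show ?thesis using C(1) by blast
qed

end
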